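(* If $a_j\neq0$ for $1\le j\le 4$, then $HC_F(\mathbf v,d)\cap(\hat\ell_1\cup\hat\ell_2\cup\hat\ell_3\cup\hat\ell_4)=\{\mathbf p_1,\mathbf p_2,\mathbf p_3,\mathbf p_4\}$, and these four points are singular points of $HC_F(\mathbf v,d)$.
   Context: On $\mathbb{C}P^4$ use homogeneous coordinates $[w_0,w_1,w_2,w_3,x_1]$. Let $Y$ be the surface $w_0w_3-w_1w_2=0$, $x_1^2+w_0w_3=0$. For parameters $[\mathbf v,d]=[v_{11},v_{12},v_{21},v_{22},d]\in\mathbb{C}P^4$ (complex, not all zero), $HC_F(\mathbf v,d)$ is the set of points of $Y$ satisfying $A(\mathbf w)x_1+C(\mathbf w)=0$, where $A(\mathbf w)=2\big(v_{22}(w_3-w_0)-v_{12}(w_2-w_1)\big)$ and $C(\mathbf w)=a_1w_0w_1+a_2w_0w_2+a_3w_1w_3+a_4w_2w_3$, with $a_1=v_{11}-v_{21}-d$, $a_2=-v_{11}-v_{21}+d$, $a_3=v_{11}+v_{21}+d$, $a_4=-v_{11}+v_{21}-d$. The lines on $Y$ are $\hat\ell_1=\{[w_0,w_1,0,0,0]\}$, $\hat\ell_2=\{[w_0,0,w_2,0,0]\}$, $\hat\ell_3=\{[0,0,w_2,w_3,0]\}$, $\hat\ell_4=\{[0,w_1,0,w_3,0]\}$. The points are $\mathbf p_1=[1,0,0,0,0]$, $\mathbf p_2=[0,0,0,1,0]$, $\mathbf p_3=[0,1,0,0,0]$, $\mathbf p_4=[0,0,1,0,0]$. A point of $HC_F(\mathbf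 v,d)$ is singular if the Jacobian matrix of the three defining polynomials $w_0w_3-w_1w_2$, $x_1^2+w_0w_3$, $A(\mathbf w)x_1+C(\mathbf w)$ has rank less than $3$ there. *)

theory Defs
  imports "HOL-Analysis.Analysis"
begin

text \<open>Points of CP^4 are represented by their nonzero homogeneous coordinate vectors
  p = vector [w0, w1, w2, w3, x1] :: complex^5, i.e. p$1 = w0, p$2 = w1, p$3 = w2,
  p$4 = w3, p$5 = x1. A subset of CP^4 cut out by homogeneous equations is represented
  by the cone of all its nonzero representatives.\<close>

definition a1 :: "complex \<Rightarrow> complex \<Rightarrow> complex \<Rightarrow> complex" where
  "a1 v11 v21 d = v11 - v21 - d"
definition a2 :: "complex \<Rightarrow> complex \<Rightarrow> complex \<Rightarrow> complex" where
  "a2 v11 v21 d = - v11 - v21 + d"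
definition a3 :: "complex \<Rightarrow> complex \<Rightarrow> complex \<Rightarrow> complex" where
  "a3 v11 v21 d = v11 + v21 + d"
definition a4 :: "complex \<Rightarrow> complex \<Rightarrow> complex \<Rightarrow> complex" where
  "a4 v11 v21 d = - v11 + v21 - d"

definition Apoly :: "complex \<Rightarrow> complex \<Rightarrow> complex^5 \<Rightarrow> complex" where
  "Apoly v12 v22 p = 2 * (v22 * (p$4 - p$1) - v12 * (p$3 - p$2))"

definition Cpoly :: "complex \<Rightarrow> complex \<Rightarrow> complex \<Rightarrow> complex^5 \<Rightarrow> complex" where
  "Cpoly v11 v21 d p = a1 v11 v21 d * p$1 * p$2 + a2 v11 v21 d * p$1 * p$3
                      + a3 v11 v21 d * p$2 * p$4 + a4 v11 v21 d * p$3 * p$4"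

definition G1 :: "complex^5 \<Rightarrow> complex" where
  "G1 p = p$1 * p$4 - p$2 * p$3"
definition G2 :: "complex^5 \<Rightarrow> complex" where
  "G2 p = (p$5)^2 + p$1 * p$4"
definition G3 :: "complex \<Rightarrow> complex \<Rightarrow> complex \<Rightarrow> complex \<Rightarrow> complex \<Rightarrow> complex^5 \<Rightarrow> complex" where
  "G3 v11 v12 v21 v22 d p = Apoly v12 v22 p * p$5 + Cpoly v11 v21 d p"

definition Ysurf :: "(complex^5) set" where
  "Ysurf = {p. p \<noteq> 0 \<and> G1 p = 0 \<and> G2 p = 0}"

definition HC_F :: "complex \<Rightarrow> complex \<Rightarrow> complex \<Rightarrow> complex \<Rightarrow> complex \<Rightarrow> (complex^5) set" where
  "HC_F v11 v12 v21 v22 d = {p \<in> Ysurf. G3 v11 v12 v21 v22 d p = 0}"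

definition line1 :: "(complex^5) set" where
  "line1 = {p. p \<noteq> 0 \<and> p$3 = 0 \<and> p$4 = 0 \<and> p$5 = 0}"
definition line2 :: "(complex^5) set" where
  "line2 = {p. p \<noteq> 0 \<and> p$2 = 0 \<and> p$4 = 0 \<and> p$5 = 0}"
definition line3 :: "(complex^5) set" where
  "line3 = {p. p \<noteq> 0 \<and> p$1 = 0 \<and> p$2 = 0 \<and> p$5 = 0}"
definition line4 :: "(complex^5) set" where
  "line4 = {p. p \<noteq> 0 \<and> p$1 = 0 \<and> p$3 = 0 \<and> p$5 = 0}"

definition pt1 :: "complex^5" where "pt1 = vector [1, 0, 0, 0, 0]"
definition pt2 :: "complex^5" where "pt2 = vector [0, 0, 0, 1, 0]"
definition pt3 :: "complex^5" where "pt3 = vector [0, 1, 0, 0, 0]"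
definition pt4 :: "complex^5" where "pt4 = vector [0, 0, 1, 0, 0]"

definition proj_pt :: "complex^5 \<Rightarrow> (complex^5) set" where
  "proj_pt q = {c *s q | c. c \<noteq> 0}"

definition partial :: "(complex^5 \<Rightarrow> complex) \<Rightarrow> 5 \<Rightarrow> complex^5 \<Rightarrow> complex" where
  "partial F j p = deriv (\<lambda>t. F (\<chi> k. if k = j then t else p$k)) (p$j)"

definition jacobian :: "complex \<Rightarrow> complex \<Rightarrow> complex \<Rightarrow> complex \<Rightarrow> complex \<Rightarrow> complex^5 \<Rightarrow> complex^5^3" where
  "jacobian v11 v12 v21 v22 d p =
     (\<chi> i j. partial (if i = 1 then G1 else if i = 2 then G2 else G3 v11 v12 v21 v22 d) j p)"

definition singular_pt :: "complex \<Rightarrow> complex \<Rightarrow> complex \<Rightarrow> complex \<Rightarrow> complex \<Rightarrow> complex^5 \<Rightarrow> bool" where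
  "singular_pt v11 v12 v21 v22 d p \<longleftrightarrow>
     p \<in> HC_F v11 v12 v21 v22 d \<and> rank (jacobian v11 v12 v21 v22 d p) < 3"

end

theory Submission imports Defs begin
lemma exhaust_5':
  fixes x :: 5
  shows "x = 1 \<or> x = 2 \<or> x = 3 \<or> x = 4 \<or> x = 5"
proof (induct x)
  case (of_int z)
  then have "z = 0 \<or> z = 1 \<or> z = 2 \<or> z = 3 \<or> z = 4" by fastforce
  then show ?case by auto
qed
lemma forall_5': "(\<forall>i::5. P i) \<longleftrightarrow> P 1 \<and> P 2 \<and> P 3 \<and> P 4 \<and> P 5"
  by (metis exhaust_5')
lemma vector_5:
 "(vector [a,b,c,e,f] ::('a::zero)^5)$1 = a"
 "(vector [a,b,c,e,f] ::('a::zero)^5)$2 = b"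
 "(vector [a,b,c,e,f] ::('a::zero)^5)$3 = c"
 "(vector [a,b,c,e,f] ::('a::zero)^5)$4 = e"
 "(vector [a,b,c,e,f] ::('a::zero)^5)$5 = f"
  unfolding vector_def by simp_all

lemma partial_G1: "partial G1 j p = (if j=1 then p$4 else if j=2 then -p$3 else if j=3 then -p$2 else if j=4 then p$1 else 0)"
  unfolding partial_def G1_def
  apply (insert exhaust_5'[of j])
  apply (elim disjE)
  apply (simp_all)
  apply (rule DERIV_imp_deriv, auto intro!: derivative_eq_intros)+
  done

lemma partial_G2: "partial G2 j p = (if j=1 then p$4 else if j=4 then p$1 else if j=5 then 2*p$5 else 0)"
  unfolding partial_def G2_def
  apply (insert exhaust_5'[of j])
  apply (elim disjE)
  apply (simp_all)
  apply (rule DERIV_imp_deriv, auto intro!: derivative_eq_intros)+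
  done


lemma rank_lt3:
  fixes A :: "complex^5^3"
  assumes "row 2 A = row 1 A \<or> row 2 A = 0"
  shows "rank A < 3"
proof -
  have sub: "rows A \<subseteq> vec.span {row 1 A, row 3 A}"
  proof
    fix x assume "x \<in> rows A"
    then obtain i where x: "x = row i A" by (auto simp: rows_def)
    have "i = 1 \<or> i = 2 \<or> i = 3" by (rule exhaust_3)
    then show "x \<in> vec.span {row 1 A, row 3 A}"
      using assms x by (auto intro: vec.span_base vec.span_zero)
  qed
  have "vec.dim (rows A) \<le> card {row 1 A, row 3 A}"
    by (rule vec.dim_le_card[OF sub]) simp
  also have "\<dots> \<le> 2" by (simp add: card_insert_le_m1)
  finally show ?thesis unfolding row_rank_def_gen by simp
qed

lemma vec5_eq: "(x::complex^5) = y \<longleftrightarrow> x$1 = y$1 \<and> x$2 = y$2 \<and> x$3 = y$3 \<and> x$4 = y$4 \<and> x$5 = y$5"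
  by (simp add: vec_eq_iff forall_5')

lemma zero5: "(x::complex^5) = 0 \<longleftrightarrow> x$1 = 0 \<and> x$2 = 0 \<and> x$3 = 0 \<and> x$4 = 0 \<and> x$5 = 0"
  by (simp add: vec5_eq)

theorem lemma5p8:
  fixes v11 v12 v21 v22 d :: complex
  assumes "(v11, v12, v21, v22, d) \<noteq> (0, 0, 0, 0, 0)"
    and "a1 v11 v21 d \<noteq> 0" and "a2 v11 v21 d \<noteq> 0"
    and "a3 v11 v21 d \<noteq> 0" and "a4 v11 v21 d \<noteq> 0"
  shows "HC_F v11 v12 v21 v22 d \<inter> (line1 \<union> line2 \<union> line3 \<union> line4)
           = proj_pt pt1 \<union> proj_pt pt2 \<union> proj_pt pt3 \<union> proj_pt pt4
         \<and> singular_pt v11 v12 v21 v22 d pt1 \<and> singular_pt v11 v12 v21 v22 d pt2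
         \<and> singular_pt v11 v12 v21 v22 d pt3 \<and> singular_pt v11 v12 v21 v22 d pt4"
proof -
  note pts = pt1_def pt2_def pt3_def pt4_def vector_5
  note hc = HC_F_def Ysurf_def G1_def G2_def G3_def Apoly_def Cpoly_def
  have inpts: "pt1 \<in> HC_F v11 v12 v21 v22 d" "pt2 \<in> HC_F v11 v12 v21 v22 d"
     "pt3 \<in> HC_F v11 v12 v21 v22 d" "pt4 \<in> HC_F v11 v12 v21 v22 d"
    by (simp_all add: hc pts zero5)
  have J: "\<And>p. row 1 (jacobian v11 v12 v21 v22 d p) = (\<chi> j. partial G1 j p)"
          "\<And>p. row 2 (jacobian v11 v12 v21 v22 d p) = (\<chi> j. partial G2 j p)"
    by (simp_all add: row_def jacobian_def)
  have s: "singular_pt v11 v12 v21 v22 d pt1 \<and> singular_pt v11 v12 v21 v22 d pt2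
         \<and> singular_pt v11 v12 v21 v22 d pt3 \<and> singular_pt v11 v12 v21 v22 d pt4"
    unfolding singular_pt_def using inpts
    by (intro conjI rank_lt3; simp add: J vec5_eq partial_G1 partial_G2 pts)
  have sub1: "HC_F v11 v12 v21 v22 d \<inter> (line1 \<union> line2 \<union> line3 \<union> line4)
           \<subseteq> proj_pt pt1 \<union> proj_pt pt2 \<union> proj_pt pt3 \<union> proj_pt pt4"
  proof
    fix p assume p: "p \<in> HC_F v11 v12 v21 v22 d \<inter> (line1 \<union> line2 \<union> line3 \<union> line4)"
    have e1: "p = p$1 *s pt1" if "p$2 = 0" "p$3 = 0" "p$4 = 0" "p$5 = 0"
      using that by (simp add: vec5_eq pts)
    have e2: "p = p$4 *s pt2" if "p$2 = 0" "p$3 = 0" "p$1 = 0" "p$5 = 0"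
      using that by (simp add: vec5_eq pts)
    have e3: "p = p$2 *s pt3" if "p$1 = 0" "p$3 = 0" "p$4 = 0" "p$5 = 0"
      using that by (simp add: vec5_eq pts)
    have e4: "p = p$3 *s pt4" if "p$2 = 0" "p$1 = 0" "p$4 = 0" "p$5 = 0"
      using that by (simp add: vec5_eq pts)
    have nz: "p \<noteq> 0" using p by (auto simp: HC_F_def Ysurf_def)
    have L: "(p$3 = 0 \<and> p$4 = 0 \<and> p$5 = 0) \<or> (p$2 = 0 \<and> p$4 = 0 \<and> p$5 = 0)
           \<or> (p$1 = 0 \<and> p$2 = 0 \<and> p$5 = 0) \<or> (p$1 = 0 \<and> p$3 = 0 \<and> p$5 = 0)"
      using p unfolding line1_def line2_def line3_def line4_def by blast
    have H: "a1 v11 v21 d * p$1 * p$2 + a2 v11 v21 d * p$1 * p$3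
                      + a3 v11 v21 d * p$2 * p$4 + a4 v11 v21 d * p$3 * p$4 = 0"
      using p L by (auto simp: HC_F_def G3_def Cpoly_def Apoly_def)
    have P: "p \<in> proj_pt pt1" if "p$1 \<noteq> 0" "p$2 = 0" "p$3 = 0" "p$4 = 0" "p$5 = 0"
      unfolding proj_pt_def using that e1 by blast
    have Q: "p \<in> proj_pt pt2" if "p$4 \<noteq> 0" "p$2 = 0" "p$3 = 0" "p$1 = 0" "p$5 = 0"
      unfolding proj_pt_def using that e2 by blast
    have R: "p \<in> proj_pt pt3" if "p$2 \<noteq> 0" "p$1 = 0" "p$3 = 0" "p$4 = 0" "p$5 = 0"
      unfolding proj_pt_def using that e3 by blast
    have S: "p \<in> proj_pt pt4" if "p$3 \<noteq> 0" "p$2 = 0" "p$1 = 0" "p$4 = 0" "p$5 = 0"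
      unfolding proj_pt_def using that e4 by blast
    have nz': "\<not> (p$1 = 0 \<and> p$2 = 0 \<and> p$3 = 0 \<and> p$4 = 0 \<and> p$5 = 0)"
      using nz zero5 by blast
    from L show "p \<in> proj_pt pt1 \<union> proj_pt pt2 \<union> proj_pt pt3 \<union> proj_pt pt4"
    proof (elim disjE conjE)
      assume "p$3 = 0" "p$4 = 0" "p$5 = 0"
      then have "a1 v11 v21 d * p$1 * p$2 = 0" using H by simp
      then have "p$1 = 0 \<or> p$2 = 0" using assms(2) by simp
      then show ?thesis using P R nz' \<open>p$3 = 0\<close> \<open>p$4 = 0\<close> \<open>p$5 = 0\<close> by blast
    next
      assume "p$2 = 0" "p$4 = 0" "p$5 = 0"
      then have "a2 v11 v21 d * p$1 * p$3 = 0" using H by simp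
      then have "p$1 = 0 \<or> p$3 = 0" using assms(3) by simp
      then show ?thesis using P S nz' \<open>p$2 = 0\<close> \<open>p$4 = 0\<close> \<open>p$5 = 0\<close> by blast
    next
      assume "p$1 = 0" "p$2 = 0" "p$5 = 0"
      then have "a4 v11 v21 d * p$3 * p$4 = 0" using H by simp
      then have "p$3 = 0 \<or> p$4 = 0" using assms(5) by simp
      then show ?thesis using Q S nz' \<open>p$1 = 0\<close> \<open>p$2 = 0\<close> \<open>p$5 = 0\<close> by blast
    next
      assume "p$1 = 0" "p$3 = 0" "p$5 = 0"
      then have "a3 v11 v21 d * p$2 * p$4 = 0" using H by simp
      then have "p$2 = 0 \<or> p$4 = 0" using assms(4) by simp
      then show ?thesis using Q R nz' \<open>p$1 = 0\<close> \<open>p$3 = 0\<close> \<open>p$5 = 0\<close> by blast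
    qed
  qed
  have sub2: "proj_pt pt1 \<union> proj_pt pt2 \<union> proj_pt pt3 \<union> proj_pt pt4 \<subseteq>
       HC_F v11 v12 v21 v22 d \<inter> (line1 \<union> line2 \<union> line3 \<union> line4)"
    unfolding proj_pt_def
    by (auto simp: hc pts zero5 line1_def line2_def line3_def line4_def)
  show ?thesis using sub1 sub2 s by blast
qed

end
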